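(* Let $(V,E,d)$ be a multi-weighted game graph and $v\in V$. If $\tau$ is a strategy of Player 2 winning from $(v,\vec H)$ in the perfect half space game $\mathrm{PHS}(\widehat V,\widehat E,d)$ for some $\vec H\in\mathcal H$, then the strategy obtained from $\tau$ by projecting away the perfect half space components (and keeping track of them internally, starting from $\vec H$) is winning for Player 2 from $v$ in the bounding game $\mathrm{Bnd}(V,E,d)$. In particular, if Player 2 wins $\mathrm{PHS}(\widehat V,\widehat E,d)$ from $v$, he wins $\mathrm{Bnd}(V,E,d)$ from $v$; and if $\tau$ is positional and perfect half space oblivious, its projection is a positional strategy in $\mathrm{Bnd}(V,E,d)$.
   Context: A multi-weighted game graph is $(V,E,d)$ with $d\ge1$, finite $V=V_1\uplus V_2$, finite $E\subseteq V\times\mathbb Z^d\times V$ with every vertex having an outgoing edge, strict alternation of players, weights determined by endpoints, not all weights zero; $\|\vec w\|=\max_i|\vec w(i)|$, $\|E\|$ the maximal norm of an edge weight. Bounding game $\mathrm{Bnd}(V,E,d)$: a play $v_0\xrightarrow{\vec w_1}v_1\cdots$ is won by Player 1 iff $\{\|\sum_{j=1}^n\vec w_j\|:n\in\mathbb N\}$ is bounded; otherwise by Player 2. A partially perfect half space is a tuple $(\vec h_1,\dots,\vec h_k)$, $0\le k\le d$, of mutually orthogonal nonzero vectors in $\mathbb Z^d$; perfect if $k=d$; norm $\max_j\|\vec h_j\|$. $\mathcal H$ is the set of perfect half spaces of norm at most $|V|\cdot\|E\|$. $(\widehat V,\widehat E,d)$ has $\widehat V_i=V_i\times\mathcal H$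 and edges $(v,\vec H)\xrightarrow{\vec w}(v',\vec H')$ for $v\xrightarrow{\vec w}v'\in E$, $\vec H,\vec H'\in\mathcal H$, with $\vec H=\vec H'$ whenever $v\in V_1$. In $\mathrm{PHS}(\widehat V,\widehat E,d)$ a play $(v_0,\vec H_0)\xrightarrow{\vec w_1}(v_1,\vec H_1)\cdots$ is won by Player 2 if some partially perfect half space $(\vec g_1,\dots,\vec g_k)$, $k>0$, is a prefix of $\vec H_i$ for all large $i$, with $\limsup_n\sum_{j\le n}\vec w_j\cdot\vec g_k=-\infty$ and $\liminf_n\sum_{j\le n}\vec w_j\cdot\vec g_\ell<+\infty$ for $\ell<k$; otherwise by Player 1. Player 2 wins PHS from $v$ if he wins from $(v,\vec H)$ for some $\vec H\in\mathcal H$. A positional Player 2 strategy is perfect half space oblivious if at each $v\in V_2$ it makes the same move at $(v,\vec H)$ for all $\vec H$. *)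

theory Defs
  imports Main "HOL-Library.Sublist"
begin

text \<open>Vectors in Z^d are functions nat => int vanishing at indices >= d.\<close>
type_synonym vec = "nat \<Rightarrow> int"

definition in_Zd :: "nat \<Rightarrow> vec \<Rightarrow> bool" where
  "in_Zd d w \<longleftrightarrow> (\<forall>i\<ge>d. w i = 0)"

definition vnorm :: "nat \<Rightarrow> vec \<Rightarrow> int" where
  "vnorm d w = Max ((\<lambda>i. \<bar>w i\<bar>) ` {..<d})"

definition dotp :: "nat \<Rightarrow> vec \<Rightarrow> vec \<Rightarrow> int" where
  "dotp d w g = (\<Sum>i<d. w i * g i)"

definition game_graph :: "'v set \<Rightarrow> 'v set \<Rightarrow> ('v \<times> vec \<times> 'v) set \<Rightarrow> nat \<Rightarrow> bool" where
  "game_graph V1 V2 E d \<longleftrightarrow>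
     d \<ge> 1 \<and> finite (V1 \<union> V2) \<and> V1 \<inter> V2 = {} \<and> finite E \<and>
     E \<subseteq> (V1 \<union> V2) \<times> {w. in_Zd d w} \<times> (V1 \<union> V2) \<and>
     (\<forall>v\<in>V1 \<union> V2. \<exists>w v'. (v, w, v') \<in> E) \<and>
     (\<forall>v w v'. (v, w, v') \<in> E \<longrightarrow> (v \<in> V1 \<longrightarrow> v' \<in> V2) \<and> (v \<in> V2 \<longrightarrow> v' \<in> V1)) \<and>
     (\<forall>v w w' v'. (v, w, v') \<in> E \<longrightarrow> (v, w', v') \<in> E \<longrightarrow> w = w') \<and>
     (\<exists>v w v'. (v, w, v') \<in> E \<and> w \<noteq> (\<lambda>_. 0))"

definition edge_norm :: "nat \<Rightarrow> ('v \<times> vec \<times> 'v) set \<Rightarrow> int" where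
  "edge_norm d E = Max ((\<lambda>(v, w, v'). vnorm d w) ` E)"

text \<open>Partially perfect half spaces: lists of mutually orthogonal nonzero vectors in Z^d.\<close>
definition pphs :: "nat \<Rightarrow> vec list \<Rightarrow> bool" where
  "pphs d gs \<longleftrightarrow> length gs \<le> d \<and> (\<forall>g\<in>set gs. in_Zd d g \<and> g \<noteq> (\<lambda>_. 0)) \<and>
     (\<forall>i<length gs. \<forall>j<length gs. i \<noteq> j \<longrightarrow> dotp d (gs ! i) (gs ! j) = 0)"

definition hs_norm :: "nat \<Rightarrow> vec list \<Rightarrow> int" where
  "hs_norm d gs = Max (vnorm d ` set gs)"

definition HS :: "'v set \<Rightarrow> 'v set \<Rightarrow> ('v \<times> vec \<times> 'v) set \<Rightarrow> nat \<Rightarrow> vec list set" where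
  "HS V1 V2 E d = {H. pphs d H \<and> length H = d \<and>
       hs_norm d H \<le> int (card (V1 \<union> V2)) * edge_norm d E}"

definition hatV1 :: "'v set \<Rightarrow> 'v set \<Rightarrow> ('v \<times> vec \<times> 'v) set \<Rightarrow> nat \<Rightarrow> ('v \<times> vec list) set" where
  "hatV1 V1 V2 E d = V1 \<times> HS V1 V2 E d"

definition hatV2 :: "'v set \<Rightarrow> 'v set \<Rightarrow> ('v \<times> vec \<times> 'v) set \<Rightarrow> nat \<Rightarrow> ('v \<times> vec list) set" where
  "hatV2 V1 V2 E d = V2 \<times> HS V1 V2 E d"

definition hatE :: "'v set \<Rightarrow> 'v set \<Rightarrow> ('v \<times> vec \<times> 'v) set \<Rightarrow> nat
     \<Rightarrow> (('v \<times> vec list) \<times> vec \<times> ('v \<times> vec list)) set" where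
  "hatE V1 V2 E d = {((v, H), w, (v', H')) | v w v' H H'.
      (v, w, v') \<in> E \<and> H \<in> HS V1 V2 E d \<and> H' \<in> HS V1 V2 E d \<and> (v \<in> V1 \<longrightarrow> H = H')}"

text \<open>Plays: vertex sequence rho and weight sequence ws, ws i being the weight of the
  (i+1)-th edge rho i -> rho (i+1).\<close>
definition play_from :: "('a \<times> vec \<times> 'a) set \<Rightarrow> 'a \<Rightarrow> (nat \<Rightarrow> 'a) \<Rightarrow> (nat \<Rightarrow> vec) \<Rightarrow> bool" where
  "play_from E v0 \<rho> ws \<longleftrightarrow> \<rho> 0 = v0 \<and> (\<forall>i. (\<rho> i, ws i, \<rho> (Suc i)) \<in> E)"

definition strategy2 :: "'a set \<Rightarrow> ('a \<times> vec \<times> 'a) set \<Rightarrow> ('a list \<Rightarrow> 'a) \<Rightarrow> bool" where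
  "strategy2 V2 E \<tau> \<longleftrightarrow> (\<forall>h. h \<noteq> [] \<longrightarrow> last h \<in> V2 \<longrightarrow> (\<exists>w. (last h, w, \<tau> h) \<in> E))"

definition consistent2 :: "'a set \<Rightarrow> ('a list \<Rightarrow> 'a) \<Rightarrow> (nat \<Rightarrow> 'a) \<Rightarrow> bool" where
  "consistent2 V2 \<tau> \<rho> \<longleftrightarrow> (\<forall>i. \<rho> i \<in> V2 \<longrightarrow> \<rho> (Suc i) = \<tau> (map \<rho> [0..<Suc i]))"

definition winning2 :: "'a set \<Rightarrow> ('a \<times> vec \<times> 'a) set \<Rightarrow> ((nat \<Rightarrow> 'a) \<Rightarrow> (nat \<Rightarrow> vec) \<Rightarrow> bool)
     \<Rightarrow> 'a \<Rightarrow> ('a list \<Rightarrow> 'a) \<Rightarrow> bool" where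
  "winning2 V2 E Win v0 \<tau> \<longleftrightarrow> strategy2 V2 E \<tau> \<and>
     (\<forall>\<rho> ws. play_from E v0 \<rho> ws \<and> consistent2 V2 \<tau> \<rho> \<longrightarrow> Win \<rho> ws)"

definition wins2 :: "'a set \<Rightarrow> ('a \<times> vec \<times> 'a) set \<Rightarrow> ((nat \<Rightarrow> 'a) \<Rightarrow> (nat \<Rightarrow> vec) \<Rightarrow> bool)
     \<Rightarrow> 'a \<Rightarrow> bool" where
  "wins2 V2 E Win v0 \<longleftrightarrow> (\<exists>\<tau>. winning2 V2 E Win v0 \<tau>)"

definition positional2 :: "'a set \<Rightarrow> ('a list \<Rightarrow> 'a) \<Rightarrow> bool" where
  "positional2 V2 \<tau> \<longleftrightarrow> (\<forall>h h'. h \<noteq> [] \<longrightarrow> h' \<noteq> [] \<longrightarrow> last h \<in> V2 \<longrightarrow> last h = last h' \<longrightarrow> \<tau> h = \<tau> h')"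

definition hs_oblivious :: "('v \<times> 'h) set \<Rightarrow> (('v \<times> 'h) list \<Rightarrow> ('v \<times> 'h)) \<Rightarrow> bool" where
  "hs_oblivious hV2 \<tau> \<longleftrightarrow> (\<forall>h h'. h \<noteq> [] \<longrightarrow> h' \<noteq> [] \<longrightarrow> last h \<in> hV2 \<longrightarrow> last h' \<in> hV2 \<longrightarrow>
       fst (last h) = fst (last h') \<longrightarrow> fst (\<tau> h) = fst (\<tau> h'))"

definition bnd_win2 :: "nat \<Rightarrow> (nat \<Rightarrow> 'a) \<Rightarrow> (nat \<Rightarrow> vec) \<Rightarrow> bool" where
  "bnd_win2 d \<rho> ws \<longleftrightarrow> \<not> (\<exists>B. \<forall>n. vnorm d (\<lambda>i. \<Sum>j<n. ws j i) \<le> B)"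

definition phs_win2 :: "nat \<Rightarrow> (nat \<Rightarrow> 'v \<times> vec list) \<Rightarrow> (nat \<Rightarrow> vec) \<Rightarrow> bool" where
  "phs_win2 d \<rho> ws \<longleftrightarrow> (\<exists>gs. gs \<noteq> [] \<and> pphs d gs \<and>
      (\<exists>N. \<forall>i\<ge>N. prefix gs (snd (\<rho> i))) \<and>
      (\<forall>B. \<exists>N. \<forall>n\<ge>N. (\<Sum>j<n. dotp d (ws j) (last gs)) < B) \<and>
      (\<forall>l < length gs - 1. \<exists>B. \<forall>N. \<exists>n\<ge>N. (\<Sum>j<n. dotp d (ws j) (gs ! l)) \<le> B))"

text \<open>Projection of a PHS strategy: track the half space component internally, starting
  from H. lift_rev works on reversed histories.\<close>
fun lift_rev :: "'v set \<Rightarrow> (('v \<times> 'h) list \<Rightarrow> ('v \<times> 'h)) \<Rightarrow> 'h \<Rightarrow> 'v list \<Rightarrow> ('v \<times> 'h) list" where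
  "lift_rev V2 \<tau> H [] = []"
| "lift_rev V2 \<tau> H [v] = [(v, H)]"
| "lift_rev V2 \<tau> H (v' # v # rest) =
     (let hh = lift_rev V2 \<tau> H (v # rest)
      in (v', if fst (hd hh) \<in> V2 then snd (\<tau> (rev hh)) else snd (hd hh)) # hh)"

definition proj :: "'v set \<Rightarrow> (('v \<times> 'h) list \<Rightarrow> ('v \<times> 'h)) \<Rightarrow> 'h \<Rightarrow> 'v list \<Rightarrow> 'v" where
  "proj V2 \<tau> H h = fst (\<tau> (rev (lift_rev V2 \<tau> H (rev h))))"

end

theory Submission
  imports Defs
begin

lemma hatE_snd:
  assumes "(x, w, y) \<in> hatE V1 V2 E d"
  shows "snd y \<in> HS V1 V2 E d \<and> snd x \<in> HS V1 V2 E d \<and> (fst x, w, fst y) \<in> E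
         \<and> (fst x \<in> V1 \<longrightarrow> snd x = snd y)"
  using assms by (auto simp: hatE_def)

lemma hatE_I:
  "(a, w, b) \<in> E \<Longrightarrow> K \<in> HS V1 V2 E d \<Longrightarrow> K' \<in> HS V1 V2 E d \<Longrightarrow> (a \<in> V1 \<longrightarrow> K = K')
   \<Longrightarrow> ((a, K), w, (b, K')) \<in> hatE V1 V2 E d"
  unfolding hatE_def by blast

lemma lift_hd:
  assumes st: "strategy2 (hatV2 V1 V2 E d) (hatE V1 V2 E d) \<tau>" and H: "H \<in> HS V1 V2 E d"
  shows "xs \<noteq> [] \<Longrightarrow> lift_rev V2 \<tau> H xs \<noteq> [] \<and> fst (hd (lift_rev V2 \<tau> H xs)) = hd xs
           \<and> snd (hd (lift_rev V2 \<tau> H xs)) \<in> HS V1 V2 E d"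
proof (induction xs)
  case Nil
  then show ?case by simp
next
  case (Cons x xs)
  show ?case
  proof (cases xs)
    case Nil
    then show ?thesis using H by simp
  next
    case (Cons y rest)
    define hh where "hh = lift_rev V2 \<tau> H (y # rest)"
    have IH: "hh \<noteq> [] \<and> fst (hd hh) = y \<and> snd (hd hh) \<in> HS V1 V2 E d"
      using Cons.IH Cons by (simp add: hh_def)
    have "(if fst (hd hh) \<in> V2 then snd (\<tau> (rev hh)) else snd (hd hh)) \<in> HS V1 V2 E d"
    proof (cases "fst (hd hh) \<in> V2")
      case True
      have "last (rev hh) = hd hh" using IH by (simp add: last_rev)
      moreover have "hd hh \<in> hatV2 V1 V2 E d" using IH True
        by (cases "hd hh") (auto simp: hatV2_def)
      ultimately obtain w where "(hd hh, w, \<tau> (rev hh)) \<in> hatE V1 V2 E d"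
        using st IH unfolding strategy2_def by (metis Nil_is_rev_conv)
      then show ?thesis using True hatE_snd by fastforce
    qed (use IH in simp)
    then show ?thesis using Cons by (simp add: hh_def[symmetric] Let_def)
  qed
qed

lemma vnorm_ge:
  assumes "i < d" shows "\<bar>w i\<bar> \<le> vnorm d w"
  using assms unfolding vnorm_def by (intro Max_ge) auto

lemma bnd_from_phs:
  assumes d: "d \<ge> 1" and lim: "\<forall>B. \<exists>N. \<forall>n\<ge>N. (\<Sum>j<n. dotp d (ws j) g) < B"
  shows "bnd_win2 d \<rho> ws"
  unfolding bnd_win2_def
proof
  assume "\<exists>B. \<forall>n. vnorm d (\<lambda>i. \<Sum>j<n. ws j i) \<le> B"
  then obtain B where B: "\<And>n. vnorm d (\<lambda>i. \<Sum>j<n. ws j i) \<le> B" by blast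
  define C where "C = (\<Sum>i<d. B * \<bar>g i\<bar>)"
  have key: "(\<Sum>j<n. dotp d (ws j) g) \<ge> - C" for n
  proof -
    have eq: "(\<Sum>j<n. dotp d (ws j) g) = (\<Sum>i<d. (\<Sum>j<n. ws j i) * g i)"
      unfolding dotp_def sum_distrib_right by (rule sum.swap)
    have "\<bar>\<Sum>i<d. (\<Sum>j<n. ws j i) * g i\<bar> \<le> (\<Sum>i<d. \<bar>(\<Sum>j<n. ws j i) * g i\<bar>)"
      by (rule sum_abs)
    also have "\<dots> \<le> C" unfolding C_def
    proof (rule sum_mono)
      fix i assume "i \<in> {..<d}"
      then have "\<bar>\<Sum>j<n. ws j i\<bar> \<le> B"
        using vnorm_ge[of i d "\<lambda>i. \<Sum>j<n. ws j i"] B[of n] by simp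
      then show "\<bar>(\<Sum>j<n. ws j i) * g i\<bar> \<le> B * \<bar>g i\<bar>"
        by (simp add: abs_mult mult_right_mono)
    qed
    finally show ?thesis using eq by linarith
  qed
  obtain N where "\<forall>n\<ge>N. (\<Sum>j<n. dotp d (ws j) g) < - C" using lim by blast
  then show False using key[of N] by auto
qed

lemma part1:
  assumes gg: "game_graph V1 V2 E d" and H: "H \<in> HS V1 V2 E d"
    and win: "winning2 (hatV2 V1 V2 E d) (hatE V1 V2 E d) (phs_win2 d) (v, H) \<tau>"
  shows "winning2 V2 E (bnd_win2 d) v (proj V2 \<tau> H)"
proof -
  have st: "strategy2 (hatV2 V1 V2 E d) (hatE V1 V2 E d) \<tau>" using win by (simp add: winning2_def)
  have disj: "V1 \<inter> V2 = {}" and d1: "d \<ge> 1" using gg by (auto simp: game_graph_def)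
  have strat: "strategy2 V2 E (proj V2 \<tau> H)"
    unfolding strategy2_def
  proof (intro allI impI)
    fix h :: "'a list" assume h: "h \<noteq> []" "last h \<in> V2"
    define hh where "hh = lift_rev V2 \<tau> H (rev h)"
    have L: "hh \<noteq> [] \<and> fst (hd hh) = last h \<and> snd (hd hh) \<in> HS V1 V2 E d"
      using lift_hd[OF st H, of "rev h"] h by (simp add: hh_def hd_rev)
    have "last (rev hh) = hd hh" using L by (simp add: last_rev)
    moreover have "hd hh \<in> hatV2 V1 V2 E d" using L h by (cases "hd hh") (auto simp: hatV2_def)
    ultimately obtain w where ew: "(hd hh, w, \<tau> (rev hh)) \<in> hatE V1 V2 E d"
      using st L unfolding strategy2_def by (metis Nil_is_rev_conv)
    have e: "(fst (hd hh), w, fst (\<tau> (rev hh))) \<in> E" using hatE_snd[OF ew] by blast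
    have p: "proj V2 \<tau> H h = fst (\<tau> (rev hh))" unfolding proj_def hh_def ..
    show "\<exists>w. (last h, w, proj V2 \<tau> H h) \<in> E"
    proof -
      from e L have "(last h, w, fst (\<tau> (rev hh))) \<in> E" by simp
      then show ?thesis unfolding p by blast
    qed
  qed
  show ?thesis unfolding winning2_def
  proof (intro conjI strat allI impI)
    fix \<rho> ws assume A: "play_from E v \<rho> ws \<and> consistent2 V2 (proj V2 \<tau> H) \<rho>"
    define L where "L n = lift_rev V2 \<tau> H (rev (map \<rho> [0..<Suc n]))" for n
    define K where "K n = snd (hd (L n))" for n
    define r where "r j = (\<rho> j, K j)" for j
    have Lsuc: "L (Suc n) = (\<rho> (Suc n), if fst (hd (L n)) \<in> V2 then snd (\<tau> (rev (L n)))
                   else snd (hd (L n))) # L n" for n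
      by (simp add: L_def Let_def)
    have kd: "snd (hd (L m)) = K m" for m by (simp add: K_def)
    have Ksuc0: "K (Suc n) = (if fst (hd (L n)) \<in> V2 then snd (\<tau> (rev (L n))) else K n)" for n
    proof -
      have "K (Suc n) = snd (hd (L (Suc n)))" by (simp add: K_def)
      also have "\<dots> = (if fst (hd (L n)) \<in> V2 then snd (\<tau> (rev (L n))) else K n)"
        unfolding Lsuc[of n] by (simp add: kd)
      finally show ?thesis .
    qed
    have LK: "L n = rev (map r [0..<Suc n])" for n
    proof (induction n)
      case 0
      then show ?case by (simp add: L_def r_def K_def)
    next
      case (Suc n)
      have fL: "fst (hd (L n)) = \<rho> n" using Suc by (simp add: r_def)
      have "L (Suc n) = r (Suc n) # L n"
        unfolding Lsuc[of n] kd r_def Ksuc0[of n] fL by simp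
      then show ?case using Suc by simp
    qed
    have fL: "fst (hd (L n)) = \<rho> n" for n using LK[of n] by (simp add: r_def)
    have Ksuc: "K (Suc n) = (if \<rho> n \<in> V2 then snd (\<tau> (map r [0..<Suc n])) else K n)" for n
    proof -
      have "K (Suc n) = (if \<rho> n \<in> V2 then snd (\<tau> (rev (L n))) else K n)"
        using Ksuc0[of n] fL[of n] by simp
      then show ?thesis using LK[of n] by simp
    qed
    have KH: "K n \<in> HS V1 V2 E d" for n
    proof (induction n)
      case 0
      then show ?case using H by (simp add: K_def L_def)
    next
      case (Suc n)
      show ?case
      proof (cases "\<rho> n \<in> V2")
        case True
        have "last (map r [0..<Suc n]) \<in> hatV2 V1 V2 E d" using True Suc
          by (simp add: r_def hatV2_def)
        moreover have "map r [0..<Suc n] \<noteq> []" by simp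
        ultimately obtain w where "(last (map r [0..<Suc n]), w, \<tau> (map r [0..<Suc n])) \<in> hatE V1 V2 E d"
          using st unfolding strategy2_def by blast
        then show ?thesis using True Ksuc[of n] hatE_snd by fastforce
      qed (use Suc Ksuc in simp)
    qed
    have play: "play_from (hatE V1 V2 E d) (v, H) r ws"
      unfolding play_from_def
    proof (intro conjI allI)
      show "r 0 = (v, H)" using A by (simp add: r_def K_def L_def play_from_def)
    next
      fix i
      have E: "(\<rho> i, ws i, \<rho> (Suc i)) \<in> E" using A by (simp add: play_from_def)
      have "\<rho> i \<in> V1 \<longrightarrow> K i = K (Suc i)" using disj Ksuc[of i] by auto
      then show "(r i, ws i, r (Suc i)) \<in> hatE V1 V2 E d"
        unfolding r_def using hatE_I[OF E KH KH] by blast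
    qed
    have cons: "consistent2 (hatV2 V1 V2 E d) \<tau> r"
      unfolding consistent2_def
    proof (intro allI impI)
      fix i assume "r i \<in> hatV2 V1 V2 E d"
      then have V: "\<rho> i \<in> V2" by (simp add: r_def hatV2_def)
      then have "\<rho> (Suc i) = proj V2 \<tau> H (map \<rho> [0..<Suc i])"
        using A by (simp add: consistent2_def)
      also have "\<dots> = fst (\<tau> (map r [0..<Suc i]))"
        unfolding proj_def using LK[of i] by (simp add: L_def)
      finally show "r (Suc i) = \<tau> (map r [0..<Suc i])"
        using V Ksuc[of i] by (simp add: r_def prod_eq_iff)
    qed
    have "phs_win2 d r ws" using win play cons by (simp add: winning2_def)
    then obtain gs where "\<forall>B. \<exists>N. \<forall>n\<ge>N. (\<Sum>j<n. dotp d (ws j) (last gs)) < B"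
      unfolding phs_win2_def by blast
    then show "bnd_win2 d \<rho> ws" using bnd_from_phs[OF d1] by blast
  qed
qed

theorem mainTheorem7:
  fixes V1 V2 :: "'v set" and E :: "('v \<times> vec \<times> 'v) set" and d :: nat and v :: 'v
  assumes "game_graph V1 V2 E d" and "v \<in> V1 \<union> V2"
  shows "(\<forall>\<tau> H. H \<in> HS V1 V2 E d \<and>
            winning2 (hatV2 V1 V2 E d) (hatE V1 V2 E d) (phs_win2 d) (v, H) \<tau>
            \<longrightarrow> winning2 V2 E (bnd_win2 d) v (proj V2 \<tau> H))
       \<and> ((\<exists>H\<in>HS V1 V2 E d. wins2 (hatV2 V1 V2 E d) (hatE V1 V2 E d) (phs_win2 d) (v, H))
            \<longrightarrow> wins2 V2 E (bnd_win2 d) v)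
       \<and> (\<forall>\<tau> H. H \<in> HS V1 V2 E d \<and> strategy2 (hatV2 V1 V2 E d) (hatE V1 V2 E d) \<tau> \<and>
            positional2 (hatV2 V1 V2 E d) \<tau> \<and> hs_oblivious (hatV2 V1 V2 E d) \<tau>
            \<longrightarrow> positional2 V2 (proj V2 \<tau> H))"
proof (intro conjI allI impI)
  fix \<tau> H assume "H \<in> HS V1 V2 E d \<and> winning2 (hatV2 V1 V2 E d) (hatE V1 V2 E d) (phs_win2 d) (v, H) \<tau>"
  then show "winning2 V2 E (bnd_win2 d) v (proj V2 \<tau> H)" using part1[OF assms(1)] by blast
next
  assume "\<exists>H\<in>HS V1 V2 E d. wins2 (hatV2 V1 V2 E d) (hatE V1 V2 E d) (phs_win2 d) (v, H)"
  then show "wins2 V2 E (bnd_win2 d) v" using part1[OF assms(1)] unfolding wins2_def by blast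
next
  fix \<tau> :: "('v \<times> vec list) list \<Rightarrow> 'v \<times> vec list" and H
  assume A: "H \<in> HS V1 V2 E d \<and> strategy2 (hatV2 V1 V2 E d) (hatE V1 V2 E d) \<tau> \<and>
            positional2 (hatV2 V1 V2 E d) \<tau> \<and> hs_oblivious (hatV2 V1 V2 E d) \<tau>"
  show "positional2 V2 (proj V2 \<tau> H)"
    unfolding positional2_def
  proof (intro allI impI)
    fix h h' :: "'v list" assume h: "h \<noteq> []" "h' \<noteq> []" "last h \<in> V2" "last h = last h'"
    define hh where "hh = lift_rev V2 \<tau> H (rev h)"
    define hh' where "hh' = lift_rev V2 \<tau> H (rev h')"
    have L: "hh \<noteq> [] \<and> fst (hd hh) = last h \<and> snd (hd hh) \<in> HS V1 V2 E d"
      using lift_hd[of V1 V2 E d \<tau> H "rev h"] A h by (simp add: hh_def hd_rev)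
    have L': "hh' \<noteq> [] \<and> fst (hd hh') = last h' \<and> snd (hd hh') \<in> HS V1 V2 E d"
      using lift_hd[of V1 V2 E d \<tau> H "rev h'"] A h by (simp add: hh'_def hd_rev)
    have "last (rev hh) \<in> hatV2 V1 V2 E d" using L h by (cases "hd hh") (auto simp: hatV2_def last_rev)
    moreover have "last (rev hh') \<in> hatV2 V1 V2 E d" using L' h by (cases "hd hh'") (auto simp: hatV2_def last_rev)
    moreover have "fst (last (rev hh)) = fst (last (rev hh'))" using L L' h by (simp add: last_rev)
    ultimately have "fst (\<tau> (rev hh)) = fst (\<tau> (rev hh'))"
      using A L L' unfolding hs_oblivious_def by (metis Nil_is_rev_conv)
    then show "proj V2 \<tau> H h = proj V2 \<tau> H h'" by (simp add: proj_def hh_def hh'_def)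
  qed
qed

end
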